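(* Let $n>2k\geq 4$ be integers. Suppose that $\mathcal{F},\mathcal{G}\subset\binom{[n]}{k}$ are non-trivial and cross-intersecting, and assume $|\mathcal{F}(\hat{1})|\geq\binom{n-2}{k-2}$ and $|\mathcal{G}(\hat{1})|\geq\binom{n-2}{k-2}$. Then: (i) $\mathcal{F}_0\cup\mathcal{G}_1$ and $\mathcal{F}_1\cup\mathcal{G}_0$ are intersecting; (ii) if $\min\{|\mathcal{F}(\hat{1})|,|\mathcal{G}(\hat{1})|\}>\binom{n-2}{k-2}$, then $\mathcal{F}_0\cup\mathcal{G}_1$ and $\mathcal{F}_1\cup\mathcal{G}_0$ are also non-trivial.
   Context: $[n]=\{1,\ldots,n\}$, $[2,n]=\{2,\ldots,n\}$, and $\binom{X}{k}$ is the family of $k$-subsets of $X$. Families $\mathcal{F},\mathcal{G}$ are cross-intersecting if $F\cap G\neq\emptyset$ for all $F\in\mathcal{F},G\in\mathcal{G}$; a family is intersecting if any two of its members intersect; a family is non-trivial if the intersection of all its members is empty. For a family $\mathcal{H}$, $\mathcal{H}(\hat{1})=\{H\in\mathcal{H}\colon 1\in H\}$ and $\mathcal{H}(\bar{1})=\{H\in\mathcal{H}\colon 1\notin H\}$. The lexicographic order on $k$-sets is defined by $F<_L G$ iff $\min(F\setminus G)<\min(G\setminus F)$. For a ground set $X$ and $1\leq m\leq\binom{|X|}{k}$, $\mathcal{L}(X,k,m)$ denotes the family of the first $m$ sets of $\binom{X}{k}$ in lexicographic order. For $\mathcal{H}\subset\binom{[n]}{k}$, define $\mathcal{H}_1=\mathcal{L}([n],k,|\mathcal{H}(\hat{1})|)$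 and $\mathcal{H}_0=\mathcal{L}([2,n],k,|\mathcal{H}(\bar{1})|)$ (the first $|\mathcal{H}(\bar 1)|$ sets of $\binom{[2,n]}{k}$ in lexicographic order). *)

theory Defs
  imports Main
begin

definition ksets :: "nat set \<Rightarrow> nat \<Rightarrow> nat set set" where
  "ksets X k = {F. F \<subseteq> X \<and> card F = k}"

definition cross_intersecting :: "nat set set \<Rightarrow> nat set set \<Rightarrow> bool" where
  "cross_intersecting F G \<longleftrightarrow> (\<forall>A\<in>F. \<forall>B\<in>G. A \<inter> B \<noteq> {})"

definition intersecting :: "nat set set \<Rightarrow> bool" where
  "intersecting F \<longleftrightarrow> (\<forall>A\<in>F. \<forall>B\<in>F. A \<inter> B \<noteq> {})"

definition nontrivial :: "nat set set \<Rightarrow> bool" where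
  "nontrivial F \<longleftrightarrow> \<Inter> F = {}"

definition with1 :: "nat set set \<Rightarrow> nat set set" where
  "with1 H = {A\<in>H. 1 \<in> A}"

definition without1 :: "nat set set \<Rightarrow> nat set set" where
  "without1 H = {A\<in>H. 1 \<notin> A}"

definition lex_less :: "nat set \<Rightarrow> nat set \<Rightarrow> bool" where
  "lex_less F G \<longleftrightarrow> F \<noteq> G \<and> Min (F - G) < Min (G - F)"

definition Lex :: "nat set \<Rightarrow> nat \<Rightarrow> nat \<Rightarrow> nat set set" where
  "Lex X k m = {G \<in> ksets X k. card {F \<in> ksets X k. lex_less F G} < m}"

definition H1 :: "nat \<Rightarrow> nat \<Rightarrow> nat set set \<Rightarrow> nat set set" where
  "H1 n k H = Lex {1..n} k (card (with1 H))"

definition H0 :: "nat \<Rightarrow> nat \<Rightarrow> nat set set \<Rightarrow> nat set set" where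
  "H0 n k H = Lex {2..n} k (card (without1 H))"

end

theory Submission
  imports Defs
begin


definition lexw :: "nat set \<Rightarrow> nat set \<Rightarrow> bool" where
  "lexw A B \<longleftrightarrow> (\<exists>j. j \<in> A \<and> j \<notin> B \<and> (\<forall>i<j. i \<in> A \<longleftrightarrow> i \<in> B))"

lemma lexw_irrefl: "\<not> lexw A A"
  by (auto simp: lexw_def)

lemma lexw_trans: assumes "lexw A B" "lexw B C" shows "lexw A C"
proof -
  obtain j1 where j1: "j1 \<in> A" "j1 \<notin> B" "\<forall>i<j1. i \<in> A \<longleftrightarrow> i \<in> B"
    using assms(1) by (auto simp: lexw_def)
  obtain j2 where j2: "j2 \<in> B" "j2 \<notin> C" "\<forall>i<j2. i \<in> B \<longleftrightarrow> i \<in> C"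
    using assms(2) by (auto simp: lexw_def)
  have "j1 \<noteq> j2" using j1 j2 by auto
  then consider "j1 < j2" | "j2 < j1" by linarith
  then show ?thesis
  proof cases
    case 1 then show ?thesis unfolding lexw_def using j1 j2
      by (intro exI[of _ j1]) auto
  next
    case 2 then show ?thesis unfolding lexw_def using j1 j2
      by (intro exI[of _ j2]) auto
  qed
qed

lemma lexw_asym: "lexw A B \<Longrightarrow> \<not> lexw B A"
  using lexw_trans lexw_irrefl by blast

lemma lexw_by_min:
  assumes "finite (A - B)" "A - B \<noteq> {}" "B - A = {} \<or> Min (A - B) < Min (B - A)" "finite (B - A)"
  shows "lexw A B"
  unfolding lexw_def
proof (intro exI[of _ "Min (A - B)"] conjI allI impI)
  show "Min (A - B) \<in> A" "Min (A - B) \<notin> B" using Min_in[OF assms(1,2)] by auto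
  fix i assume i: "i < Min (A - B)"
  show "i \<in> A \<longleftrightarrow> i \<in> B"
  proof
    assume "i \<in> A" show "i \<in> B"
    proof (rule ccontr)
      assume "i \<notin> B" then have "Min (A - B) \<le> i" using \<open>i \<in> A\<close> assms(1) by auto
      then show False using i by simp
    qed
  next
    assume "i \<in> B" show "i \<in> A"
    proof (rule ccontr)
      assume "i \<notin> A" then have "Min (B - A) \<le> i" using \<open>i \<in> B\<close> assms(4) by auto
      then show False using i assms(3) \<open>i \<notin> A\<close> \<open>i \<in> B\<close> by auto
    qed
  qed
qed

lemma lexw_total:
  assumes "finite A" "finite B" "A \<noteq> B" shows "lexw A B \<or> lexw B A"
proof -
  have fin: "finite (A - B)" "finite (B - A)" using assms by auto
  have ne: "A - B \<noteq> {} \<or> B - A \<noteq> {}" using assms(3) by auto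
  show ?thesis
  proof (cases "A - B = {}")
    case True then show ?thesis using lexw_by_min[of B A] fin ne by auto
  next
    case AB: False
    show ?thesis
    proof (cases "B - A = {}")
      case True then show ?thesis using lexw_by_min[of A B] fin AB by auto
    next
      case False
      have "Min (A - B) \<noteq> Min (B - A)" using Min_in[OF fin(1) AB] Min_in[OF fin(2) False] by auto
      then have "Min (A - B) < Min (B - A) \<or> Min (B - A) < Min (A - B)" by linarith
      then show ?thesis using lexw_by_min[of A B] lexw_by_min[of B A] fin AB False by auto
    qed
  qed
qed

lemma lex_less_lexw:
  assumes "finite A" "finite B" "card A = card B"
  shows "lex_less A B \<longleftrightarrow> lexw A B"
proof
  assume L: "lex_less A B"
  then have "A \<noteq> B" by (simp add: lex_less_def)
  have AB: "A - B \<noteq> {}"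
  proof
    assume "A - B = {}" then have "A \<subseteq> B" by auto
    then have "A = B" using assms card_subset_eq by blast
    then show False using \<open>A \<noteq> B\<close> by simp
  qed
  have BA: "B - A \<noteq> {}"
  proof
    assume "B - A = {}" then have "B \<subseteq> A" by auto
    then have "B = A" using assms card_subset_eq by metis
    then show False using \<open>A \<noteq> B\<close> by simp
  qed
  show "lexw A B" using lexw_by_min[of A B] assms L AB by (auto simp: lex_less_def)
next
  assume L: "lexw A B"
  then have ne: "A \<noteq> B" using lexw_irrefl by blast
  have AB: "A - B \<noteq> {}" using L by (auto simp: lexw_def)
  have BA: "B - A \<noteq> {}"
  proof
    assume "B - A = {}" then have "B \<subseteq> A" by auto
    then have "B = A" using assms card_subset_eq by metis
    then show False using ne by simp
  qed
  have fin: "finite (A - B)" "finite (B - A)" using assms by auto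
  have "Min (A - B) \<noteq> Min (B - A)" using Min_in[OF fin(1) AB] Min_in[OF fin(2) BA] by auto
  moreover have "\<not> Min (B - A) < Min (A - B)"
  proof
    assume "Min (B - A) < Min (A - B)"
    then have "lexw B A" using lexw_by_min[of B A] fin BA by auto
    then show False using L lexw_asym by blast
  qed
  ultimately show "lex_less A B" using ne by (auto simp: lex_less_def)
qed



definition pred :: "nat set \<Rightarrow> nat \<Rightarrow> nat set \<Rightarrow> nat set set" where
  "pred X k E = {F \<in> ksets X k. lexw F E}"

lemma finite_ksets: "finite X \<Longrightarrow> finite (ksets X k)"
  unfolding ksets_def by (rule finite_subset[of _ "Pow X"]) auto

lemma ksetsD: "A \<in> ksets X k \<Longrightarrow> finite X \<Longrightarrow> finite A \<and> card A = k \<and> A \<subseteq> X"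
  unfolding ksets_def using finite_subset by auto

lemma ksetsI: "A \<subseteq> X \<Longrightarrow> card A = k \<Longrightarrow> A \<in> ksets X k"
  unfolding ksets_def by auto

lemma card_ksets: "finite X \<Longrightarrow> card (ksets X k) = card X choose k"
  unfolding ksets_def using n_subsets by blast

lemma Lex_eq: assumes "finite X"
  shows "Lex X k m = {G \<in> ksets X k. card (pred X k G) < m}"
proof -
  have "\<And>G. G \<in> ksets X k \<Longrightarrow> {F \<in> ksets X k. lex_less F G} = pred X k G"
  proof -
    fix G assume G: "G \<in> ksets X k"
    have "\<And>F. F \<in> ksets X k \<Longrightarrow> lex_less F G \<longleftrightarrow> lexw F G"
    proof -
      fix F assume F: "F \<in> ksets X k"
      show "lex_less F G \<longleftrightarrow> lexw F G"
        using ksetsD[OF F assms] ksetsD[OF G assms] by (intro lex_less_lexw) auto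
    qed
    then show "{F \<in> ksets X k. lex_less F G} = pred X k G" unfolding pred_def by auto
  qed
  then show ?thesis unfolding Lex_def by auto
qed

lemma finite_pred: "finite X \<Longrightarrow> finite (pred X k E)"
  unfolding pred_def using finite_ksets by auto

lemma pred_strict:
  assumes "finite X" "E \<in> ksets X k" "lexw E E'"
  shows "pred X k E \<subset> pred X k E'"
proof -
  have "pred X k E \<subseteq> pred X k E'" unfolding pred_def using assms lexw_trans by blast
  moreover have "E \<in> pred X k E'" "E \<notin> pred X k E" using assms lexw_irrefl unfolding pred_def by auto
  ultimately show ?thesis by blast
qed

lemma pred_card_strict:
  assumes "finite X" "E \<in> ksets X k" "lexw E E'"
  shows "card (pred X k E) < card (pred X k E')"
  using pred_strict[OF assms] finite_pred[OF assms(1)] by (simp add: psubset_card_mono)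

lemma Lex_down:
  assumes "finite X" "T \<in> Lex X k m" "T' \<in> ksets X k" "lexw T' T"
  shows "T' \<in> Lex X k m"
  using assms pred_card_strict[OF assms(1,3,4)] unfolding Lex_eq[OF assms(1)] by auto

lemma Lex_sub: "finite X \<Longrightarrow> Lex X k m \<subseteq> ksets X k"
  unfolding Lex_eq by auto

lemma card_Lex_le: assumes "finite X" shows "card (Lex X k m) \<le> m"
proof -
  have "inj_on (\<lambda>G. card (pred X k G)) (Lex X k m)"
  proof (rule inj_onI)
    fix G G' assume G: "G \<in> Lex X k m" "G' \<in> Lex X k m" "card (pred X k G) = card (pred X k G')"
    show "G = G'"
    proof (rule ccontr)
      assume "G \<noteq> G'"
      have "G \<in> ksets X k" "G' \<in> ksets X k" using G Lex_sub[OF assms] by auto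
      then have "lexw G G' \<or> lexw G' G"
        using lexw_total[OF _ _ \<open>G \<noteq> G'\<close>] ksetsD[OF _ assms] by metis
      then show False
      proof
        assume "lexw G G'"
        then have "card (pred X k G) < card (pred X k G')"
          using pred_card_strict[OF assms \<open>G \<in> ksets X k\<close>] by blast
        then show False using G(3) by simp
      next
        assume "lexw G' G"
        then have "card (pred X k G') < card (pred X k G)"
          using pred_card_strict[OF assms \<open>G' \<in> ksets X k\<close>] by blast
        then show False using G(3) by simp
      qed
    qed
  qed
  moreover have "(\<lambda>G. card (pred X k G)) ` (Lex X k m) \<subseteq> {..<m}"
    unfolding Lex_eq[OF assms] by auto
  ultimately have "card (Lex X k m) \<le> card {..<m}"
    using card_inj_on_le[of "\<lambda>G. card (pred X k G)" "Lex X k m" "{..<m}"] by blast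
  then show ?thesis by simp
qed

lemma lex_min:
  assumes "finite X" "Z \<subseteq> ksets X k" "Z \<noteq> {}"
  shows "\<exists>R\<in>Z. \<forall>E\<in>Z. \<not> lexw E R"
proof -
  obtain R where R: "R \<in> Z" "\<forall>E. E \<in> Z \<longrightarrow> card (pred X k R) \<le> card (pred X k E)"
    using ex_has_least_nat[of "\<lambda>E. E \<in> Z" _ "\<lambda>E. card (pred X k E)"] assms(3) by blast
  show ?thesis
  proof (intro bexI[OF _ R(1)] ballI notI)
    fix E assume "E \<in> Z" "lexw E R"
    moreover have "E \<in> ksets X k" using \<open>E \<in> Z\<close> assms(2) by blast
    ultimately have "card (pred X k E) < card (pred X k R)" using pred_card_strict[OF assms(1)] by blast
    then show False using R \<open>E \<in> Z\<close> by force
  qed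
qed

lemma lexw_compl:
  assumes "A \<subseteq> Y" "B \<subseteq> Y" "lexw A B" shows "lexw (Y - B) (Y - A)"
proof -
  obtain j where j: "j \<in> A" "j \<notin> B" "\<forall>i<j. i \<in> A \<longleftrightarrow> i \<in> B" using assms(3) lexw_def by blast
  show ?thesis unfolding lexw_def using j assms(1) by (intro exI[of _ j]) auto
qed

lemma lexw_insert:
  assumes "x \<notin> A" "x \<notin> B" shows "lexw (insert x A) (insert x B) \<longleftrightarrow> lexw A B"
proof
  assume "lexw (insert x A) (insert x B)"
  then obtain j where j: "j \<in> insert x A" "j \<notin> insert x B" "\<forall>i<j. i \<in> insert x A \<longleftrightarrow> i \<in> insert x B"
    using lexw_def by blast
  have "j \<in> A" "j \<notin> B" using j by auto
  moreover have "\<forall>i<j. i \<in> A \<longleftrightarrow> i \<in> B"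
  proof (intro allI impI)
    fix i assume "i < j"
    then have "i \<in> insert x A \<longleftrightarrow> i \<in> insert x B" using j(3) by blast
    then show "i \<in> A \<longleftrightarrow> i \<in> B" using assms by (cases "i = x") auto
  qed
  ultimately show "lexw A B" unfolding lexw_def by blast
next
  assume "lexw A B"
  then obtain j where j: "j \<in> A" "j \<notin> B" "\<forall>i<j. i \<in> A \<longleftrightarrow> i \<in> B"
    using lexw_def by blast
  have "j \<in> insert x A" "j \<notin> insert x B" using j assms by auto
  moreover have "\<forall>i<j. i \<in> insert x A \<longleftrightarrow> i \<in> insert x B"
  proof (intro allI impI)
    fix i assume "i < j"
    then have "i \<in> A \<longleftrightarrow> i \<in> B" using j(3) by blast
    then show "i \<in> insert x A \<longleftrightarrow> i \<in> insert x B" by auto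
  qed
  ultimately show "lexw (insert x A) (insert x B)" unfolding lexw_def by blast
qed

lemma lexw_first:
  assumes "x \<in> A" "x \<notin> B" "\<forall>i<x. i \<notin> A \<and> i \<notin> B" shows "lexw A B"
  using assms unfolding lexw_def by auto



definition mov :: "nat set \<Rightarrow> nat set \<Rightarrow> nat set \<Rightarrow> bool" where
  "mov U V D \<longleftrightarrow> U \<subseteq> D \<and> V \<inter> D = {}"

definition cmp :: "nat set \<Rightarrow> nat set \<Rightarrow> nat set \<Rightarrow> nat set" where
  "cmp U V D = (D - U) \<union> V"

definition C :: "nat set \<Rightarrow> nat set \<Rightarrow> nat set set \<Rightarrow> nat set set" where
  "C U V F = {D \<in> F. \<not> mov U V D \<or> cmp U V D \<in> F} \<union> cmp U V ` {D \<in> F. mov U V D \<and> cmp U V D \<notin> F}"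

definition compressed :: "nat set \<Rightarrow> nat set \<Rightarrow> nat set set \<Rightarrow> bool" where
  "compressed U V F \<longleftrightarrow> (\<forall>D\<in>F. mov U V D \<longrightarrow> cmp U V D \<in> F)"

definition shadow :: "nat set set \<Rightarrow> nat set set" where
  "shadow F = {B. \<exists>A\<in>F. \<exists>x\<in>A. B = A - {x}}"

lemma shadowI: "A \<in> F \<Longrightarrow> x \<in> A \<Longrightarrow> B = A - {x} \<Longrightarrow> B \<in> shadow F"
  unfolding shadow_def by blast

lemma compressed_empty: "compressed {} {} F"
  unfolding compressed_def cmp_def by auto

lemma C_cases:
  assumes "A \<in> C U V F"
  obtains "A \<in> F" "\<not> mov U V A \<or> cmp U V A \<in> F"
    | D where "D \<in> F" "mov U V D" "A = cmp U V D" "cmp U V D \<notin> F"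
  using assms unfolding C_def by blast

lemma C_Im_I:
  assumes "U \<inter> V = {}" "V \<subseteq> E" "U \<inter> E = {}" "U \<noteq> {}" "E \<in> F \<or> (E - V) \<union> U \<in> F"
  shows "E \<in> C U V F"
proof (cases "E \<in> F")
  case True
  have "\<not> mov U V E" using assms unfolding mov_def by blast
  then show ?thesis using True unfolding C_def by blast
next
  case False
  let ?D = "(E - V) \<union> U"
  have D: "?D \<in> F" using False assms by blast
  have m: "mov U V ?D" using assms unfolding mov_def by blast
  have c: "cmp U V ?D = E" using assms unfolding cmp_def by blast
  show ?thesis unfolding C_def using D m c False by (auto intro!: image_eqI[of E _ ?D])
qed

lemma C_Mov_I:
  assumes "mov U V E" "E \<in> F" "cmp U V E \<in> F"
  shows "E \<in> C U V F"
  using assms unfolding C_def by blast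

lemma C_other_I:
  assumes "\<not> mov U V E" "E \<in> F"
  shows "E \<in> C U V F"
  using assms unfolding C_def by blast

lemma shadow_C:
  assumes UV: "U \<inter> V = {}" "U \<noteq> {}"
    and cond: "\<forall>v\<in>V. \<exists>u\<in>U. compressed (U - {u}) (V - {v}) F"
  shows "shadow (C U V F) \<subseteq> C U V (shadow F)"
proof
  fix B assume "B \<in> shadow (C U V F)"
  then obtain A x where A: "A \<in> C U V F" "x \<in> A" "B = A - {x}" unfolding shadow_def by blast
  consider (Im) "V \<subseteq> B" "U \<inter> B = {}" | (Mv) "mov U V B" | (Ot) "\<not> (V \<subseteq> B \<and> U \<inter> B = {})" "\<not> mov U V B"
    by blast
  then show "B \<in> C U V (shadow F)"
  proof cases
    case Im
    show ?thesis
    proof (rule C_Im_I[OF UV(1) Im UV(2)])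
      from A(1) show "B \<in> shadow F \<or> (B - V) \<union> U \<in> shadow F"
      proof (cases rule: C_cases)
        case 1 then show ?thesis using A shadowI by blast
      next
        case (2 D)
        have xD: "x \<in> D" "x \<notin> U" using A 2 Im UV unfolding cmp_def mov_def by auto
        have "(B - V) \<union> U = D - {x}" using A 2 Im UV xD unfolding cmp_def mov_def by auto
        then show ?thesis using shadowI[OF 2(1) xD(1)] by blast
      qed
    qed
  next
    case Mv
    from A(1) show ?thesis
    proof (cases rule: C_cases)
      case (2 D)
      have "U \<subseteq> A" using Mv A unfolding mov_def by blast
      moreover have "U \<inter> A = {}" using 2 UV unfolding cmp_def by blast
      ultimately show ?thesis using UV by blast
    next
      case 1
      have BF: "B \<in> shadow F" using A 1 shadowI by blast
      have xU: "x \<notin> U" "x \<notin> B" using A Mv unfolding mov_def by auto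
      have "cmp U V B \<in> shadow F"
      proof (cases "x \<in> V")
        case False
        then have "mov U V A" using Mv A unfolding mov_def by blast
        then have cA: "cmp U V A \<in> F" using 1 by blast
        have "x \<in> cmp U V A" "cmp U V B = cmp U V A - {x}"
          using A xU False unfolding cmp_def by auto
        then show ?thesis using shadowI[OF cA] by blast
      next
        case True
        obtain u where u: "u \<in> U" "compressed (U - {u}) (V - {x}) F" using cond True by blast
        have "mov (U - {u}) (V - {x}) A" using Mv A unfolding mov_def by auto
        then have cA: "cmp (U - {u}) (V - {x}) A \<in> F" using u(2) 1(1) unfolding compressed_def by blast
        have uB: "u \<in> B" using u Mv unfolding mov_def by auto
        have e1: "u \<in> cmp (U - {u}) (V - {x}) A" using uB A unfolding cmp_def by auto
        have e2: "cmp U V B = cmp (U - {u}) (V - {x}) A - {u}"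
          using A xU True u UV Mv uB unfolding cmp_def mov_def by auto
        show ?thesis using shadowI[OF cA e1 e2] .
      qed
      then show ?thesis using C_Mov_I[OF Mv BF] by blast
    qed
  next
    case Ot
    from A(1) show ?thesis
    proof (cases rule: C_cases)
      case 1 then show ?thesis using A shadowI C_other_I[OF Ot(2)] by blast
    next
      case (2 D)
      have AU: "U \<inter> A = {}" "V \<subseteq> A" using 2 UV unfolding cmp_def by auto
      then have xV: "x \<in> V" using Ot A by blast
      obtain u where u: "u \<in> U" "compressed (U - {u}) (V - {x}) F" using cond xV by blast
      have "mov (U - {u}) (V - {x}) D" using 2 unfolding mov_def by auto
      then have cD: "cmp (U - {u}) (V - {x}) D \<in> F" using u(2) 2(1) unfolding compressed_def by blast
      have e1: "u \<in> cmp (U - {u}) (V - {x}) D" using u 2 unfolding cmp_def mov_def by auto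
      have e2: "B = cmp (U - {u}) (V - {x}) D - {u}"
        using A 2 xV u UV unfolding cmp_def mov_def by auto
      have "B \<in> shadow F" using shadowI[OF cD e1 e2] .
      then show ?thesis using C_other_I[OF Ot(2)] by blast
    qed
  qed
qed



lemma C_decomp:
  assumes "M = {D \<in> G. mov U V D \<and> cmp U V D \<notin> G}"
  shows "C U V G = (G - M) \<union> cmp U V ` M" "(G - M) \<inter> cmp U V ` M = {}"
proof -
  show "C U V G = (G - M) \<union> cmp U V ` M" unfolding C_def assms by auto
  show "(G - M) \<inter> cmp U V ` M = {}" unfolding assms by auto
qed

lemma cmp_inj: assumes "U \<inter> V = {}" shows "inj_on (cmp U V) {D. mov U V D}"
proof (rule inj_onI)
  fix D D' assume "D \<in> {D. mov U V D}" "D' \<in> {D. mov U V D}" "cmp U V D = cmp U V D'"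
  then have "(cmp U V D - V) \<union> U = D" "(cmp U V D' - V) \<union> U = D'"
    using assms unfolding mov_def cmp_def by auto
  then show "D = D'" using \<open>cmp U V D = cmp U V D'\<close> by metis
qed

lemma card_C: assumes "finite G" "U \<inter> V = {}" shows "card (C U V G) = card G"
proof -
  define M where "M = {D \<in> G. mov U V D \<and> cmp U V D \<notin> G}"
  have d: "C U V G = (G - M) \<union> cmp U V ` M" "(G - M) \<inter> cmp U V ` M = {}"
    using C_decomp[OF M_def] by blast+
  have fM: "finite M" "M \<subseteq> G" using assms M_def by auto
  have inj: "inj_on (cmp U V) M" using cmp_inj[OF assms(2)] by (rule inj_on_subset) (auto simp: M_def)
  have "card (C U V G) = card (G - M) + card (cmp U V ` M)"
    unfolding d(1) using d(2) assms fM by (intro card_Un_disjoint) auto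
  also have "\<dots> = card (G - M) + card M" using card_image[OF inj] by simp
  also have "\<dots> = card G" using fM assms card_Diff_subset[of M G] card_mono[of G M] by simp
  finally show ?thesis .
qed

definition valid :: "nat set \<Rightarrow> nat set \<Rightarrow> nat set \<Rightarrow> bool" where
  "valid Y U V \<longleftrightarrow> U \<subseteq> Y \<and> V \<subseteq> Y \<and> U \<inter> V = {} \<and> card U = card V \<and> U \<noteq> {} \<and> Min U < Min V"

definition upc :: "nat set \<Rightarrow> nat \<Rightarrow> nat set set \<Rightarrow> bool" where
  "upc Y s Q \<longleftrightarrow> Q \<subseteq> ksets Y s \<and> (\<forall>A\<in>Q. \<forall>B\<in>ksets Y s. lexw A B \<longrightarrow> B \<in> Q)"

definition succs :: "nat set \<Rightarrow> nat \<Rightarrow> nat set \<Rightarrow> nat set set" where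
  "succs Y s D = {E \<in> ksets Y s. lexw D E}"

definition mu :: "nat set \<Rightarrow> nat \<Rightarrow> nat set set \<Rightarrow> nat" where
  "mu Y s F = (\<Sum>D\<in>F. card (succs Y s D))"

lemma compressed_all_upc:
  assumes Y: "finite Y" and F: "F \<subseteq> ksets Y s"
    and all: "\<forall>U V. valid Y U V \<longrightarrow> compressed U V F"
  shows "upc Y s F"
  unfolding upc_def
proof (intro conjI F ballI impI)
  fix A B assume A: "A \<in> F" and B: "B \<in> ksets Y s" and AB: "lexw A B"
  have Ak: "A \<in> ksets Y s" using A F by blast
  have fa: "finite A" "card A = s" "A \<subseteq> Y" using ksetsD[OF Ak Y] by auto
  have fb: "finite B" "card B = s" "B \<subseteq> Y" using ksetsD[OF B Y] by auto
  have ll: "lex_less A B" using lex_less_lexw[of A B] fa fb AB by simp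
  have "card (A - B) = card (B - A)"
    using fa fb card_Diff_subset_Int[of A B] card_Diff_subset_Int[of B A] by (simp add: Int_commute)
  moreover have "A - B \<noteq> {}" using AB unfolding lexw_def by blast
  ultimately have v: "valid Y (A - B) (B - A)"
    unfolding valid_def using fa fb ll by (auto simp: lex_less_def)
  have "mov (A - B) (B - A) A" unfolding mov_def by auto
  then have "cmp (A - B) (B - A) A \<in> F" using all v A unfolding compressed_def by blast
  moreover have "cmp (A - B) (B - A) A = B" unfolding cmp_def by auto
  ultimately show "B \<in> F" by simp
qed

lemma cmp_ksets:
  assumes Y: "finite Y" and v: "valid Y U V" and D: "D \<in> ksets Y s" and m: "mov U V D"
  shows "cmp U V D \<in> ksets Y s"
proof -
  have fd: "finite D" "card D = s" "D \<subseteq> Y" using ksetsD[OF D Y] by auto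
  have fv: "finite U" "finite V" using v Y finite_subset unfolding valid_def by blast+
  have "card (cmp U V D) = card (D - U) + card V"
    unfolding cmp_def using fd fv m by (intro card_Un_disjoint) (auto simp: mov_def)
  also have "card (D - U) = card D - card U" using m fv by (auto simp: mov_def card_Diff_subset)
  finally have "card (cmp U V D) = s" using v fd m fv card_mono[of D U] by (auto simp: valid_def mov_def)
  moreover have "cmp U V D \<subseteq> Y" using v fd unfolding valid_def cmp_def by auto
  ultimately show ?thesis by (simp add: ksets_def)
qed

lemma C_ksets:
  assumes "finite Y" "valid Y U V" "F \<subseteq> ksets Y s"
  shows "C U V F \<subseteq> ksets Y s"
proof
  fix E assume "E \<in> C U V F"
  then show "E \<in> ksets Y s"
  proof (cases rule: C_cases)
    case 1 then show ?thesis using assms by blast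
  next
    case (2 D) then show ?thesis using cmp_ksets[OF assms(1,2)] assms(3) by blast
  qed
qed

lemma lexw_cmp:
  assumes Y: "finite Y" and v: "valid Y U V" and m: "mov U V D"
  shows "lexw D (cmp U V D)"
proof -
  have fv: "finite U" "finite V" using v Y finite_subset unfolding valid_def by blast+
  have Vne: "V \<noteq> {}" using v fv unfolding valid_def by auto
  have j: "Min U \<in> U" using fv v Min_in unfolding valid_def by blast
  show ?thesis unfolding lexw_def
  proof (intro exI[of _ "Min U"] conjI allI impI)
    show "Min U \<in> D" using j m unfolding mov_def by blast
    show "Min U \<notin> cmp U V D" using j v unfolding cmp_def valid_def by blast
    fix i assume i: "i < Min U"
    have "i \<notin> U"
    proof
      assume "i \<in> U" then have "Min U \<le> i" using fv by simp
      then show False using i by simp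
    qed
    moreover have "i \<notin> V"
    proof
      assume "i \<in> V" then have "Min V \<le> i" using fv by simp
      then show False using i v unfolding valid_def by simp
    qed
    ultimately show "i \<in> D \<longleftrightarrow> i \<in> cmp U V D" unfolding cmp_def by blast
  qed
qed

lemma mu_decrease:
  assumes Y: "finite Y" and v: "valid Y U V" and F: "F \<subseteq> ksets Y s"
    and nc: "\<not> compressed U V F"
  shows "mu Y s (C U V F) < mu Y s F"
proof -
  define M where "M = {D \<in> F. mov U V D \<and> cmp U V D \<notin> F}"
  have UV: "U \<inter> V = {}" using v valid_def by blast
  have d: "C U V F = (F - M) \<union> cmp U V ` M" "(F - M) \<inter> cmp U V ` M = {}"
    using C_decomp[OF M_def] by blast+
  have fF: "finite F" using F finite_ksets[OF Y] finite_subset by blast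
  have fM: "finite M" "M \<subseteq> F" using fF M_def by auto
  have Mne: "M \<noteq> {}" using nc unfolding compressed_def M_def by blast
  have inj: "inj_on (cmp U V) M" using cmp_inj[OF UV] by (rule inj_on_subset) (auto simp: M_def)
  let ?f = "\<lambda>D. card (succs Y s D)"
  have lt: "\<And>D. D \<in> M \<Longrightarrow> ?f (cmp U V D) < ?f D"
  proof -
    fix D assume D: "D \<in> M"
    have Dk: "D \<in> ksets Y s" "mov U V D" using D fM F M_def by auto
    have ck: "cmp U V D \<in> ksets Y s" using cmp_ksets[OF Y v Dk] .
    have l: "lexw D (cmp U V D)" using lexw_cmp[OF Y v Dk(2)] .
    have "succs Y s (cmp U V D) \<subset> succs Y s D"
    proof -
      have "succs Y s (cmp U V D) \<subseteq> succs Y s D" unfolding succs_def using l lexw_trans by blast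
      moreover have "cmp U V D \<in> succs Y s D" "cmp U V D \<notin> succs Y s (cmp U V D)"
        unfolding succs_def using ck l lexw_irrefl by auto
      ultimately show ?thesis by blast
    qed
    moreover have "finite (succs Y s D)" unfolding succs_def using finite_ksets[OF Y] by auto
    ultimately show "?f (cmp U V D) < ?f D" by (simp add: psubset_card_mono)
  qed
  have "mu Y s (C U V F) = sum ?f (F - M) + sum ?f (cmp U V ` M)"
    unfolding mu_def d(1) using d(2) fF fM by (intro sum.union_disjoint) auto
  also have "sum ?f (cmp U V ` M) = sum (?f \<circ> cmp U V) M" using sum.reindex[OF inj] by simp
  also have "\<dots> < sum ?f M" using sum_strict_mono[OF fM(1) Mne, of "?f \<circ> cmp U V" ?f] lt by simp
  also have "sum ?f (F - M) + sum ?f M = mu Y s F"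
    unfolding mu_def using fF fM sum.subset_diff[of M F ?f] by simp
  finally show ?thesis by simp
qed

lemma finite_shadow:
  assumes "finite Y" "F \<subseteq> ksets Y s" shows "finite (shadow F)"
proof -
  have "shadow F \<subseteq> Pow Y" using assms unfolding shadow_def ksets_def by auto
  then show ?thesis using assms finite_subset by blast
qed



lemma finite_C: "finite G \<Longrightarrow> finite (C U V G)"
  unfolding C_def by auto

lemma KK_compress:
  assumes Y: "finite Y"
  shows "F \<subseteq> ksets Y s \<Longrightarrow> \<exists>F'. upc Y s F' \<and> card F' = card F \<and> card (shadow F') \<le> card (shadow F)"
proof (induction "mu Y s F" arbitrary: F rule: less_induct)
  case less
  have fF: "finite F" using less.prems finite_ksets[OF Y] finite_subset by blast
  show ?case
  proof (cases "\<forall>U V. valid Y U V \<longrightarrow> compressed U V F")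
    case True
    then show ?thesis using compressed_all_upc[OF Y less.prems] by blast
  next
    case False
    then obtain U0 V0 where "valid Y U0 V0 \<and> \<not> compressed U0 V0 F" by blast
    then obtain U where Uex: "\<exists>V. valid Y U V \<and> \<not> compressed U V F"
      and Umin: "\<And>U'. (\<exists>V'. valid Y U' V' \<and> \<not> compressed U' V' F) \<Longrightarrow> card U \<le> card U'"
      using ex_has_least_nat[of "\<lambda>U. \<exists>V. valid Y U V \<and> \<not> compressed U V F" U0 card] by blast
    then obtain V where v: "valid Y U V" and nc: "\<not> compressed U V F" by blast
    have min: "\<And>U' V'. valid Y U' V' \<Longrightarrow> \<not> compressed U' V' F \<Longrightarrow> card U \<le> card U'"
      using Umin by blast
    have UV: "U \<inter> V = {}" "U \<noteq> {}" "card U = card V" "U \<subseteq> Y" "V \<subseteq> Y" "Min U < Min V"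
      using v unfolding valid_def by auto
    have fU: "finite U" "finite V" using finite_subset[OF UV(4) Y] finite_subset[OF UV(5) Y] by auto
    have cond: "\<forall>v\<in>V. \<exists>u\<in>U. compressed (U - {u}) (V - {v}) F"
    proof
      fix x assume x: "x \<in> V"
      show "\<exists>u\<in>U. compressed (U - {u}) (V - {x}) F"
      proof (cases "card U = 1")
        case True
        have "\<exists>u. U = {u}" using True by (simp add: card_1_singleton_iff)
        then obtain u where u: "U = {u}" by (elim exE)
        have "card V = Suc 0" using True UV(3) by simp
        then have "\<exists>w. V = {w}" by (simp add: card_1_singleton_iff)
        then obtain w where w: "V = {w}" by (elim exE)
        have e1: "U - {u} = {}" using u by simp
        have e2: "V - {x} = {}" using w x by simp
        have "compressed (U - {u}) (V - {x}) F" unfolding e1 e2 by (rule compressed_empty)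
        moreover have "u \<in> U" using u by simp
        ultimately show ?thesis by blast
      next
        case False
        have "card U \<noteq> 0" using UV(2) fU by simp
        then have c2: "card U \<ge> 2" using False by linarith
        have mU: "Min U \<in> U" using fU UV Min_in by blast
        have "card (U - {Min U}) = card U - 1" using mU by (rule card_Diff_singleton)
        then have "card (U - {Min U}) \<noteq> 0" using c2 by linarith
        then have "U - {Min U} \<noteq> {}" by (metis card.empty)
        then obtain u where u: "u \<in> U" "u \<noteq> Min U" by blast
        have Vx: "V - {x} \<noteq> {}"
        proof
          assume "V - {x} = {}" then have "V = {x}" using x by blast
          then show False using c2 UV(3) by simp
        qed
        have "compressed (U - {u}) (V - {x}) F"
        proof (rule ccontr)
          assume ncc: "\<not> compressed (U - {u}) (V - {x}) F"
          have m1: "Min (U - {u}) \<le> Min U" using mU u fU by (intro Min_le) auto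
          have m2: "Min V \<le> Min (V - {x})" using Vx fU Min_in[of "V - {x}"] by (intro Min_le) auto
          have cc: "card (U - {u}) = card (V - {x})"
            using card_Diff_singleton[OF u(1)] card_Diff_singleton[OF x] UV(3) by simp
          have "Min U \<in> U - {u}" using mU u by blast
          then have ne: "U - {u} \<noteq> {}" by blast
          have "valid Y (U - {u}) (V - {x})"
            unfolding valid_def using UV(1,4,5,6) cc ne m1 m2 by auto
          then have "card U \<le> card (U - {u})" using min ncc by blast
          moreover have "card (U - {u}) < card U" by (rule card_Diff1_less[OF fU(1) u(1)])
          ultimately show False by simp
        qed
        then show ?thesis using u by blast
      qed
    qed
    let ?F1 = "C U V F"
    have F1k: "?F1 \<subseteq> ksets Y s" using C_ksets[OF Y v less.prems] .
    have mu1: "mu Y s ?F1 < mu Y s F" using mu_decrease[OF Y v less.prems nc] .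
    obtain F' where F': "upc Y s F'" "card F' = card ?F1" "card (shadow F') \<le> card (shadow ?F1)"
      using less.hyps[OF mu1 F1k] by blast
    have "card ?F1 = card F" using card_C[OF fF UV(1)] .
    moreover have "card (shadow ?F1) \<le> card (shadow F)"
    proof -
      have fs: "finite (shadow F)" using finite_shadow[OF Y less.prems] .
      have "card (shadow ?F1) \<le> card (C U V (shadow F))"
        using shadow_C[OF UV(1,2) cond] finite_C[OF fs] by (rule card_mono[rotated])
      also have "\<dots> = card (shadow F)" using card_C[OF fs UV(1)] .
      finally show ?thesis .
    qed
    ultimately show ?thesis using F' by auto
  qed
qed

lemma upc_nested:
  assumes Y: "finite Y" and Q: "upc Y s Q" and P: "upc Y s P" and c: "card Q \<le> card P"
  shows "Q \<subseteq> P"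
proof
  fix G assume G: "G \<in> Q"
  show "G \<in> P"
  proof (rule ccontr)
    assume nG: "G \<notin> P"
    have Qk: "Q \<subseteq> ksets Y s" and Qu: "\<And>A B. A \<in> Q \<Longrightarrow> B \<in> ksets Y s \<Longrightarrow> lexw A B \<Longrightarrow> B \<in> Q"
      using Q unfolding upc_def by blast+
    have Pk: "P \<subseteq> ksets Y s" and Pu: "\<And>A B. A \<in> P \<Longrightarrow> B \<in> ksets Y s \<Longrightarrow> lexw A B \<Longrightarrow> B \<in> P"
      using P unfolding upc_def by blast+
    have Gk: "G \<in> ksets Y s" using G Qk by blast
    have sub: "P \<subseteq> Q - {G}"
    proof
      fix H assume H: "H \<in> P"
      have Hk: "H \<in> ksets Y s" using H Pk by blast
      have HG: "H \<noteq> G" using H nG by blast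
      have fin: "finite H" "finite G" using ksetsD[OF Hk Y] ksetsD[OF Gk Y] by auto
      have "lexw H G \<or> lexw G H" using lexw_total[OF fin HG] .
      then show "H \<in> Q - {G}"
      proof
        assume "lexw H G" then have "G \<in> P" using Pu[OF H Gk] by simp
        then show ?thesis using nG by simp
      next
        assume "lexw G H" then have "H \<in> Q" using Qu[OF G Hk] by simp
        then show ?thesis using HG by simp
      qed
    qed
    have fQ: "finite Q" using Qk finite_ksets[OF Y] finite_subset by blast
    have "card P \<le> card (Q - {G})" using card_mono[OF _ sub] fQ by simp
    also have "\<dots> < card Q" by (rule card_Diff1_less[OF fQ G])
    finally show False using c by simp
  qed
qed

lemma KK1:
  assumes Y: "finite Y" and Q: "upc Y s Q" and D: "D \<subseteq> ksets Y s" and c: "card Q \<le> card D"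
  shows "card (shadow Q) \<le> card (shadow D)"
proof -
  obtain F' where F': "upc Y s F'" "card F' = card D" "card (shadow F') \<le> card (shadow D)"
    using KK_compress[OF Y D] by blast
  have "Q \<subseteq> F'" using upc_nested[OF Y Q F'(1)] c F'(2) by simp
  then have "shadow Q \<subseteq> shadow F'" unfolding shadow_def by blast
  moreover have "finite (shadow F')" using finite_shadow[OF Y] F'(1) unfolding upc_def by blast
  ultimately have "card (shadow Q) \<le> card (shadow F')" using card_mono by blast
  then show ?thesis using F'(3) by linarith
qed



lemma shadow_ksets:
  assumes Y: "finite Y" and Q: "Q \<subseteq> ksets Y s"
  shows "shadow Q \<subseteq> ksets Y (s - 1)"
proof
  fix B assume "B \<in> shadow Q"
  then obtain A x where A: "A \<in> Q" "x \<in> A" "B = A - {x}" unfolding shadow_def by blast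
  have "finite A" "card A = s" "A \<subseteq> Y" using ksetsD[of A Y s] A Q Y by auto
  then show "B \<in> ksets Y (s - 1)" using A by (simp add: ksets_def card_Diff_singleton) blast
qed

lemma shadow_upc:
  assumes Y: "finite Y" and Q: "upc Y s Q" and s: "s \<ge> 1"
  shows "upc Y (s - 1) (shadow Q)"
proof -
  have Qk: "Q \<subseteq> ksets Y s" and Qu: "\<And>A B. A \<in> Q \<Longrightarrow> B \<in> ksets Y s \<Longrightarrow> lexw A B \<Longrightarrow> B \<in> Q"
    using Q unfolding upc_def by blast+
  have up: "B' \<in> shadow Q" if B: "B \<in> shadow Q" and B': "B' \<in> ksets Y (s - 1)" and l: "lexw B B'" for B B'
  proof -
    obtain R x where R: "R \<in> Q" "x \<in> R" "B = R - {x}" using B unfolding shadow_def by blast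
    have Rk: "R \<in> ksets Y s" using R Qk by blast
    have fR: "finite R" "card R = s" "R \<subseteq> Y" using ksetsD[OF Rk Y] by auto
    have fB': "finite B'" "card B' = s - 1" "B' \<subseteq> Y" using ksetsD[OF B' Y] by auto
    have xB: "x \<notin> B" "R = insert x B" using R by auto
    obtain j where j: "j \<in> B" "j \<notin> B'" "\<forall>i<j. i \<in> B \<longleftrightarrow> i \<in> B'" using l unfolding lexw_def by blast
    show ?thesis
    proof (cases "x \<in> B'")
      case False
      let ?R' = "insert x B'"
      have "lexw R ?R'" using xB False l lexw_insert by simp
      moreover have "?R' \<in> ksets Y s"
        using fB' False fR R s unfolding ksets_def by auto
      ultimately have "?R' \<in> Q" using Qu R(1) by blast
      then show ?thesis using shadowI[of ?R' Q x B'] False by simp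
    next
      case True
      have xj: "j < x"
      proof -
        have "x \<noteq> j" using True j by blast
        moreover have "\<not> x < j" using j(3) True xB(1) by blast
        ultimately show ?thesis by linarith
      qed
      show ?thesis
      proof (cases "\<exists>y. y \<in> Y \<and> j < y \<and> y \<notin> B'")
        case True
        then obtain y where y: "y \<in> Y" "j < y" "y \<notin> B'" by blast
        let ?R' = "insert y B'"
        have "lexw R ?R'" unfolding lexw_def
        proof (intro exI[of _ j] conjI allI impI)
          show "j \<in> R" using j xB by blast
          show "j \<notin> ?R'" using j y by auto
          fix i assume "i < j"
          then show "i \<in> R \<longleftrightarrow> i \<in> ?R'" using j(3) xj y(2) xB(2) by auto
        qed
        moreover have "?R' \<in> ksets Y s"
          using fB' y fR s unfolding ksets_def by auto
        ultimately have "?R' \<in> Q" using Qu R(1) by blast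
        then show ?thesis using shadowI[of ?R' Q y B'] y by simp
      next
        case False
        let ?R' = "insert j B'"
        have jY: "j \<in> Y" using j fR xB by blast
        have sub: "R \<subseteq> ?R'"
        proof
          fix i assume i: "i \<in> R"
          show "i \<in> ?R'"
          proof (cases "i = x")
            case True then show ?thesis using \<open>x \<in> B'\<close> by simp
          next
            case ix: False
            then have iB: "i \<in> B" using i xB by blast
            consider "i < j" | "i = j" | "j < i" by linarith
            then show ?thesis
            proof cases
              case 1 then show ?thesis using j(3) iB by blast
            next
              case 2 then show ?thesis by simp
            next
              case 3 then show ?thesis using False iB fR xB by blast
            qed
          qed
        qed
        have "card ?R' = s" using fB' j(2) s by simp
        then have "R = ?R'" using card_subset_eq[OF _ sub] fB' fR by simp
        then have "B' = R - {j}" using j(2) by auto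
        then show ?thesis using shadowI[OF R(1), of j B'] xB j by blast
      qed
    qed
  qed
  show ?thesis unfolding upc_def using shadow_ksets[OF Y Qk] up by blast
qed

definition sh :: "nat set \<Rightarrow> nat \<Rightarrow> nat set set \<Rightarrow> nat set set" where
  "sh Y t D = {R \<in> ksets Y t. \<exists>A\<in>D. R \<subseteq> A}"

lemma sh_top:
  assumes Y: "finite Y" and D: "D \<subseteq> ksets Y s" shows "sh Y s D = D"
proof
  show "D \<subseteq> sh Y s D" unfolding sh_def using D by blast
  show "sh Y s D \<subseteq> D"
  proof
    fix R assume "R \<in> sh Y s D"
    then obtain A where R: "R \<in> ksets Y s" "A \<in> D" "R \<subseteq> A" unfolding sh_def by blast
    have "A \<in> ksets Y s" using R D by blast
    then have "R = A" using card_subset_eq[OF _ R(3)] ksetsD[OF _ Y] R(1) by metis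
    then show "R \<in> D" using R by simp
  qed
qed

lemma sh_step:
  assumes Y: "finite Y" and D: "D \<subseteq> ksets Y s" and t: "t < s"
  shows "sh Y t D = shadow (sh Y (Suc t) D)"
proof
  show "sh Y t D \<subseteq> shadow (sh Y (Suc t) D)"
  proof
    fix R assume "R \<in> sh Y t D"
    then obtain A where R: "R \<in> ksets Y t" "A \<in> D" "R \<subseteq> A" unfolding sh_def by blast
    have fA: "finite A" "card A = s" "A \<subseteq> Y" using ksetsD[of A Y s] R D Y by auto
    have fR: "finite R" "card R = t" "R \<subseteq> Y" using ksetsD[OF R(1) Y] by auto
    have "A - R \<noteq> {}"
    proof
      assume "A - R = {}" then have "A \<subseteq> R" by blast
      then have "card A \<le> card R" using card_mono fR by blast
      then show False using fA fR t by simp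
    qed
    then obtain x where x: "x \<in> A" "x \<notin> R" by blast
    have "insert x R \<in> sh Y (Suc t) D"
      unfolding sh_def ksets_def using x fR fA R by auto
    moreover have "R = insert x R - {x}" using x by simp
    ultimately show "R \<in> shadow (sh Y (Suc t) D)" using shadowI[of "insert x R" _ x R] by blast
  qed
  show "shadow (sh Y (Suc t) D) \<subseteq> sh Y t D"
  proof
    fix B assume "B \<in> shadow (sh Y (Suc t) D)"
    then obtain R x where R: "R \<in> sh Y (Suc t) D" "x \<in> R" "B = R - {x}" unfolding shadow_def by blast
    then obtain A where A: "R \<in> ksets Y (Suc t)" "A \<in> D" "R \<subseteq> A" unfolding sh_def by blast
    have fR: "finite R" "card R = Suc t" "R \<subseteq> Y" using ksetsD[OF A(1) Y] by auto
    have "B \<in> ksets Y t" unfolding ksets_def using R fR by (auto simp: card_Diff_singleton)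
    then show "B \<in> sh Y t D" unfolding sh_def using A R by blast
  qed
qed

lemma sh_sub: "sh Y t D \<subseteq> ksets Y t" unfolding sh_def by blast

lemma KKt_aux:
  assumes Y: "finite Y" and Q: "upc Y s Q" and D: "D \<subseteq> ksets Y s" and c: "card Q \<le> card D"
  shows "s - t = d \<Longrightarrow> t \<le> s \<Longrightarrow> upc Y t (sh Y t Q) \<and> card (sh Y t Q) \<le> card (sh Y t D)"
proof (induction d arbitrary: t)
  case 0
  then have "t = s" by simp
  have Qk: "Q \<subseteq> ksets Y s" using Q upc_def by blast
  show ?case using sh_top[OF Y Qk] sh_top[OF Y D] Q c \<open>t = s\<close> by simp
next
  case (Suc d)
  then have t: "t < s" "s - Suc t = d" "Suc t \<le> s" by auto
  have IH: "upc Y (Suc t) (sh Y (Suc t) Q)" "card (sh Y (Suc t) Q) \<le> card (sh Y (Suc t) D)"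
    using Suc.IH[OF t(2) t(3)] by auto
  have Qk: "Q \<subseteq> ksets Y s" using Q upc_def by blast
  have e1: "sh Y t Q = shadow (sh Y (Suc t) Q)" using sh_step[OF Y Qk t(1)] .
  have e2: "sh Y t D = shadow (sh Y (Suc t) D)" using sh_step[OF Y D t(1)] .
  have "upc Y (Suc t - 1) (shadow (sh Y (Suc t) Q))" using shadow_upc[OF Y IH(1)] by simp
  then have u: "upc Y t (sh Y t Q)" using e1 by simp
  have "card (shadow (sh Y (Suc t) Q)) \<le> card (shadow (sh Y (Suc t) D))"
    using KK1[OF Y IH(1) sh_sub IH(2)] .
  then show ?case using u e1 e2 by simp
qed

lemma KKt:
  assumes "finite Y" "upc Y s Q" "D \<subseteq> ksets Y s" "card Q \<le> card D" "t \<le> s"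
  shows "upc Y t (sh Y t Q) \<and> card (sh Y t Q) \<le> card (sh Y t D)"
  using KKt_aux[OF assms(1-4) refl assms(5)] .



lemma hilton:
  assumes Y: "finite Y" and A: "A \<subseteq> ksets Y k" and B: "B \<subseteq> ksets Y l"
    and cross: "\<And>T S. T \<in> A \<Longrightarrow> S \<in> B \<Longrightarrow> T \<inter> S \<noteq> {}"
    and kl: "k + l \<le> card Y"
    and T: "T \<in> Lex Y k (card A)" and S: "S \<in> Lex Y l (card B)"
  shows "T \<inter> S \<noteq> {}"
proof
  assume TS: "T \<inter> S = {}"
  define m where "m = card Y"
  define P where "P = (\<lambda>X. Y - X) ` Lex Y k (card A)"
  have compk: "Y - X \<in> ksets Y (m - k)" if "X \<in> ksets Y k" for X
    using ksetsD[OF that Y] Y unfolding m_def ksets_def by (auto simp: card_Diff_subset)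
  have Pk: "P \<subseteq> ksets Y (m - k)" unfolding P_def using Lex_sub[OF Y] compk by blast
  have Pu: "B0 \<in> P" if R: "R \<in> P" and B0: "B0 \<in> ksets Y (m - k)" and l: "lexw R B0" for R B0
  proof -
    obtain T0 where T0: "T0 \<in> Lex Y k (card A)" "R = Y - T0" using R unfolding P_def by blast
    have T0k: "T0 \<in> ksets Y k" using T0 Lex_sub[OF Y] by blast
    have fT0: "T0 \<subseteq> Y" using ksetsD[OF T0k Y] by auto
    have fB0: "finite B0" "card B0 = m - k" "B0 \<subseteq> Y" using ksetsD[OF B0 Y] by auto
    have "lexw (Y - B0) (Y - R)" using lexw_compl[OF _ fB0(3) l] T0 by blast
    moreover have "Y - R = T0" using T0 fT0 by blast
    ultimately have l2: "lexw (Y - B0) T0" by simp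
    have "card (Y - B0) = k" using fB0 Y kl unfolding m_def by (simp add: card_Diff_subset)
    then have "Y - B0 \<in> ksets Y k" unfolding ksets_def by blast
    then have "Y - B0 \<in> Lex Y k (card A)" using Lex_down[OF Y T0(1) _ l2] by blast
    moreover have "B0 = Y - (Y - B0)" using fB0 by blast
    ultimately show ?thesis unfolding P_def by blast
  qed
  have upcP: "upc Y (m - k) P" unfolding upc_def using Pk Pu by blast
  define Ac where "Ac = (\<lambda>X. Y - X) ` A"
  have Ack: "Ac \<subseteq> ksets Y (m - k)" unfolding Ac_def using A compk by blast
  have injA: "inj_on (\<lambda>X. Y - X) A"
  proof (rule inj_onI)
    fix X X' assume "X \<in> A" "X' \<in> A" "Y - X = Y - X'"
    moreover have "X \<subseteq> Y" "X' \<subseteq> Y" using \<open>X \<in> A\<close> \<open>X' \<in> A\<close> A unfolding ksets_def by auto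
    ultimately show "X = X'" by blast
  qed
  have cAc: "card Ac = card A" unfolding Ac_def using card_image[OF injA] .
  have "card P \<le> card (Lex Y k (card A))" unfolding P_def by (rule card_image_le) (rule finite_subset[OF Lex_sub[OF Y] finite_ksets[OF Y]])
  also have "\<dots> \<le> card A" by (rule card_Lex_le[OF Y])
  finally have cP: "card P \<le> card Ac" using cAc by simp
  have lmk: "l \<le> m - k" using kl unfolding m_def by simp
  have KK: "upc Y l (sh Y l P)" "card (sh Y l P) \<le> card (sh Y l Ac)"
    using KKt[OF Y upcP Ack cP lmk] by auto
  define W where "W = sh Y l P"
  define L where "L = Lex Y l (card B)"
  have disj: "sh Y l Ac \<inter> B = {}"
  proof (rule ccontr)
    assume "sh Y l Ac \<inter> B \<noteq> {}"
    then obtain S' where S': "S' \<in> B" "S' \<in> sh Y l Ac" by blast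
    then obtain X where X: "X \<in> Ac" "S' \<subseteq> X" unfolding sh_def by blast
    then obtain T' where T': "T' \<in> A" "X = Y - T'" unfolding Ac_def by blast
    have "T' \<inter> S' = {}" using X T' by blast
    then show False using cross[OF T'(1) S'(1)] by simp
  qed
  have fKl: "finite (ksets Y l)" using finite_ksets[OF Y] .
  have "card (sh Y l Ac) + card B = card (sh Y l Ac \<union> B)"
    using disj finite_subset[OF sh_sub fKl] finite_subset[OF B fKl] by (simp add: card_Un_disjoint)
  also have "\<dots> \<le> card (ksets Y l)" using sh_sub B fKl by (intro card_mono) auto
  finally have c1: "card (sh Y l Ac) + card B \<le> card (ksets Y l)" .
  have Sk: "S \<in> ksets Y l" using S Lex_sub[OF Y] by blast
  have Tk: "T \<in> ksets Y k" using T Lex_sub[OF Y] by blast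
  have SW: "S \<in> W"
  proof -
    have "Y - T \<in> P" unfolding P_def using T by blast
    moreover have "S \<subseteq> Y - T" using TS ksetsD[OF Sk Y] by blast
    ultimately show ?thesis unfolding W_def sh_def using Sk by blast
  qed
  have SL: "S \<in> L" unfolding L_def using S .
  have cover: "ksets Y l \<subseteq> W \<union> L"
  proof
    fix E assume E: "E \<in> ksets Y l"
    show "E \<in> W \<union> L"
    proof (cases "E = S")
      case True then show ?thesis using SW by simp
    next
      case False
      have "finite E" "finite S" using ksetsD[OF E Y] ksetsD[OF Sk Y] by auto
      then have "lexw E S \<or> lexw S E" using lexw_total False by blast
      then show ?thesis
      proof
        assume "lexw E S" then have "E \<in> L" unfolding L_def using Lex_down[OF Y S E] by blast
        then show ?thesis by simp
      next
        assume "lexw S E" then have "E \<in> W" using KK(1) SW E unfolding upc_def W_def by blast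
        then show ?thesis by simp
      qed
    qed
  qed
  have fW: "finite W" unfolding W_def using finite_subset[OF sh_sub fKl] .
  have fL: "finite L" unfolding L_def using finite_subset[OF Lex_sub[OF Y] fKl] .
  have "card (ksets Y l) + 1 \<le> card (W \<union> L) + card (W \<inter> L)"
  proof -
    have "card (ksets Y l) \<le> card (W \<union> L)" using cover fW fL by (intro card_mono) auto
    moreover have "card (W \<inter> L) \<ge> 1" using SW SL fW
      by (metis IntI One_nat_def Suc_leI card_gt_0_iff empty_iff finite_Int)
    ultimately show ?thesis by linarith
  qed
  also have "\<dots> = card W + card L" using card_Un_Int[OF fW fL] by simp
  finally have c2: "card (ksets Y l) + 1 \<le> card W + card L" .
  have "card L \<le> card B" unfolding L_def by (rule card_Lex_le[OF Y])
  moreover have "card W \<le> card (sh Y l Ac)" using KK(2) W_def by simp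
  ultimately show False using c1 c2 by linarith
qed



lemma down_in_Lex:
  assumes X: "finite X" and Z: "Z \<subseteq> ksets X k"
    and down: "\<And>E E'. E \<in> Z \<Longrightarrow> E' \<in> ksets X k \<Longrightarrow> lexw E' E \<Longrightarrow> E' \<in> Z"
    and E: "E \<in> Z" and c: "card Z \<le> b"
  shows "E \<in> Lex X k b"
proof -
  have "pred X k E \<subseteq> Z - {E}" unfolding pred_def using down E lexw_irrefl by blast
  moreover have fZ: "finite Z" using finite_subset[OF Z finite_ksets[OF X]] .
  ultimately have "card (pred X k E) \<le> card (Z - {E})" by (intro card_mono) auto
  also have "\<dots> < card Z" by (rule card_Diff1_less[OF fZ E])
  finally have "card (pred X k E) < b" using c by linarith
  then show ?thesis unfolding Lex_eq[OF X] using E Z by blast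
qed

lemma star_down:
  assumes X: "finite X" and x: "\<forall>y\<in>X. x \<le> y"
    and E: "E \<in> ksets X k" "x \<in> E" and E': "E' \<in> ksets X k" and l: "lexw E' E"
  shows "x \<in> E'"
proof (rule ccontr)
  assume nx: "x \<notin> E'"
  have "E \<subseteq> X" "E' \<subseteq> X" using E E' unfolding ksets_def by auto
  then have "\<forall>i<x. i \<notin> E \<and> i \<notin> E'" using x by force
  then have "lexw E E'" using lexw_first[OF E(2) nx] by blast
  then show False using l lexw_asym by blast
qed

lemma Lex_has_min:
  assumes X: "finite X" and x: "\<forall>y\<in>X. x \<le> y"
    and T: "T \<in> Lex X k b" and b: "b \<le> card {E \<in> ksets X k. x \<in> E}"
  shows "x \<in> T"
proof (rule ccontr)
  assume nx: "x \<notin> T"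
  have Tk: "T \<in> ksets X k" using T Lex_sub[OF X] by blast
  have "{E \<in> ksets X k. x \<in> E} \<subseteq> pred X k T"
  proof
    fix E assume E: "E \<in> {E \<in> ksets X k. x \<in> E}"
    have "E \<subseteq> X" "T \<subseteq> X" using E Tk unfolding ksets_def by auto
    then have "\<forall>i<x. i \<notin> E \<and> i \<notin> T" using x by force
    then have "lexw E T" using lexw_first[of x E T] E nx by blast
    then show "E \<in> pred X k T" unfolding pred_def using E by blast
  qed
  then have "card {E \<in> ksets X k. x \<in> E} \<le> card (pred X k T)"
    using finite_pred[OF X] by (intro card_mono) auto
  moreover have "card (pred X k T) < b" using T unfolding Lex_eq[OF X] by blast
  ultimately show False using b by linarith
qed

lemma card_with:
  assumes X: "finite X" and x: "x \<in> X" and k: "k \<ge> 1"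
  shows "card {E \<in> ksets X k. x \<in> E \<and> P (E - {x})} = card {E' \<in> ksets (X - {x}) (k - 1). P E'}"
proof -
  have inj: "inj_on (insert x) {E' \<in> ksets (X - {x}) (k - 1). P E'}"
  proof (rule inj_onI)
    fix A B assume "A \<in> {E' \<in> ksets (X - {x}) (k - 1). P E'}" "B \<in> {E' \<in> ksets (X - {x}) (k - 1). P E'}"
      "insert x A = insert x B"
    then show "A = B" unfolding ksets_def by blast
  qed
  have img: "insert x ` {E' \<in> ksets (X - {x}) (k - 1). P E'} = {E \<in> ksets X k. x \<in> E \<and> P (E - {x})}"
  proof
    show "insert x ` {E' \<in> ksets (X - {x}) (k - 1). P E'} \<subseteq> {E \<in> ksets X k. x \<in> E \<and> P (E - {x})}"
    proof
      fix E assume "E \<in> insert x ` {E' \<in> ksets (X - {x}) (k - 1). P E'}"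
      then obtain E' where E': "E' \<in> ksets (X - {x}) (k - 1)" "P E'" "E = insert x E'" by blast
      have fE': "finite E'" "card E' = k - 1" "E' \<subseteq> X - {x}" using ksetsD[OF E'(1)] X by auto
      have "x \<notin> E'" using fE' by blast
      then have "card E = k" using fE' E'(3) k by simp
      moreover have "E - {x} = E'" using E'(3) fE' by auto
      ultimately show "E \<in> {E \<in> ksets X k. x \<in> E \<and> P (E - {x})}"
        using E' fE' x unfolding ksets_def by auto
    qed
    show "{E \<in> ksets X k. x \<in> E \<and> P (E - {x})} \<subseteq> insert x ` {E' \<in> ksets (X - {x}) (k - 1). P E'}"
    proof
      fix E assume E: "E \<in> {E \<in> ksets X k. x \<in> E \<and> P (E - {x})}"
      have fE: "finite E" "card E = k" "E \<subseteq> X" using E ksetsD[of E X k] X by auto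
      have "E - {x} \<in> ksets (X - {x}) (k - 1)" using fE E unfolding ksets_def by (auto simp: card_Diff_singleton)
      moreover have "E = insert x (E - {x})" using E by blast
      ultimately show "E \<in> insert x ` {E' \<in> ksets (X - {x}) (k - 1). P E'}" using E by blast
    qed
  qed
  show ?thesis using card_image[OF inj] img by simp
qed



lemma basic_facts:
  assumes "n > 2 * k" "k \<ge> 2"
  shows "finite {1..n}" "finite {2..n::nat}" "card {1..n} = n" "card {2..n} = n - 1"
    "{2..n} = {1..n} - {1}" "\<forall>y\<in>{1..n}. 1 \<le> y" "\<forall>y\<in>{2..n}. 2 \<le> y" "2 \<in> {2..n}" "1 \<in> {1..n}"
  using assms by auto

lemma card_star2:
  assumes n: "n > 2 * k" "k \<ge> 2"
  shows "card {E \<in> ksets {2..n} (k - 1). 2 \<in> E} = (n - 2) choose (k - 2)"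
proof -
  have "card {E \<in> ksets {2..n} (k - 1). 2 \<in> E \<and> (\<lambda>_. True) (E - {2})}
      = card {E' \<in> ksets ({2..n} - {2}) (k - 1 - 1). (\<lambda>_. True) E'}"
    using n by (intro card_with) auto
  moreover have "card ({2..n} - {2::nat}) = n - 2" using n by simp
  ultimately show ?thesis using card_ksets[of "{2..n} - {2::nat}"] n
    by (simp add: numeral_2_eq_2)
qed

lemma card_C12:
  assumes n: "n > 2 * k" "k \<ge> 2"
  shows "card {E \<in> ksets {1..n} k. 1 \<in> E \<and> 2 \<in> E} = (n - 2) choose (k - 2)"
proof -
  have "card {E \<in> ksets {1..n} k. 1 \<in> E \<and> (\<lambda>E'. 2 \<in> E') (E - {1})}
      = card {E' \<in> ksets ({1..n} - {1}) (k - 1). (\<lambda>E'. 2 \<in> E') E'}"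
    using n by (intro card_with) auto
  moreover have "{1..n} - {1} = {2..n::nat}" by auto
  moreover have "{E \<in> ksets {1..n} k. 1 \<in> E \<and> (\<lambda>E'. 2 \<in> E') (E - {1})} = {E \<in> ksets {1..n} k. 1 \<in> E \<and> 2 \<in> E}"
    by auto
  ultimately show ?thesis using card_star2[OF n] by simp
qed



lemma part_i:
  assumes n: "n > 2 * k" "k \<ge> 2"
    and F: "F \<subseteq> ksets {1..n} k" and G: "G \<subseteq> ksets {1..n} k"
    and cr: "cross_intersecting F G"
    and bG: "card (with1 G) \<ge> (n - 2) choose (k - 2)"
  shows "intersecting (H0 n k F \<union> H1 n k G)"
proof -
  define N where "N = {1..n}"
  define Y where "Y = {2..n}"
  note bf = basic_facts[OF n]
  have fN: "finite N" and fY: "finite Y" and cN: "card N = n" and cY: "card Y = n - 1"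
    and YN: "Y = N - {1}" and mN: "\<forall>y\<in>N. 1 \<le> y" and mY: "\<forall>y\<in>Y. 2 \<le> y" and Y2: "2 \<in> Y"
    and N1: "1 \<in> N"
    unfolding N_def Y_def using bf(1) bf(2) bf(3) bf(4) bf(5) bf(6) bf(7) bf(8) bf(9) by blast+
  define a where "a = card (without1 F)"
  define b where "b = card (with1 G)"
  define Af where "Af = without1 F"
  define Bg where "Bg = (\<lambda>E. E - {1}) ` with1 G"
  have Afk: "Af \<subseteq> ksets Y k"
  proof
    fix E assume "E \<in> Af"
    then have "E \<in> F" "1 \<notin> E" unfolding Af_def without1_def by auto
    then show "E \<in> ksets Y k" using F unfolding ksets_def YN N_def by blast
  qed
  have Bgk: "Bg \<subseteq> ksets Y (k - 1)"
  proof
    fix S assume "S \<in> Bg"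
    then obtain E where E: "E \<in> G" "1 \<in> E" "S = E - {1}" unfolding Bg_def with1_def by blast
    have "E \<in> ksets N k" using E G N_def by blast
    then have "finite E" "card E = k" "E \<subseteq> N" using ksetsD[OF _ fN] by auto
    then show "S \<in> ksets Y (k - 1)" using E unfolding ksets_def YN by (auto simp: card_Diff_singleton)
  qed
  have injB: "inj_on (\<lambda>E. E - {1}) (with1 G)"
  proof (rule inj_onI)
    fix E E' assume "E \<in> with1 G" "E' \<in> with1 G" "E - {1} = E' - {1}"
    then show "E = E'" unfolding with1_def by (metis insert_Diff mem_Collect_eq)
  qed
  have cAf: "card Af = a" unfolding Af_def a_def ..
  have cBg: "card Bg = b" unfolding Bg_def b_def using card_image[OF injB] .
  have crossAB: "T \<inter> S \<noteq> {}" if TA: "T \<in> Af" and SB: "S \<in> Bg" for T S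
  proof -
    obtain E where E: "E \<in> G" "1 \<in> E" "S = E - {1}" using SB unfolding Bg_def with1_def by blast
    have T: "T \<in> F" "1 \<notin> T" using TA unfolding Af_def without1_def by auto
    have "T \<inter> E \<noteq> {}" using cr T(1) E(1) unfolding cross_intersecting_def by blast
    then show ?thesis using T(2) E(3) by blast
  qed
  have kl: "k + (k - 1) \<le> card Y" using cY n by simp
  have hil: "T \<inter> S \<noteq> {}" if "T \<in> Lex Y k a" "S \<in> Lex Y (k - 1) b" for T S
    using hilton[OF fY Afk Bgk crossAB kl] that cAf cBg by blast
  have star1: "b \<le> card {E \<in> ksets N k. 1 \<in> E}"
  proof -
    have "with1 G \<subseteq> {E \<in> ksets N k. 1 \<in> E}" using G unfolding with1_def N_def by blast
    then show ?thesis unfolding b_def using finite_ksets[OF fN] by (intro card_mono) auto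
  qed
  have F1: "1 \<in> R" if "R \<in> Lex N k b" for R
    using Lex_has_min[OF fN mN that star1] .
  have F2: "R - {1} \<in> Lex Y (k - 1) b" if R: "R \<in> Lex N k b" for R
  proof -
    have Rk: "R \<in> ksets N k" using R Lex_sub[OF fN] by blast
    have fR: "finite R" "card R = k" "R \<subseteq> N" using ksetsD[OF Rk fN] by auto
    have R1: "1 \<in> R" using F1[OF R] .
    define R' where "R' = R - {1}"
    have R'k: "R' \<in> ksets Y (k - 1)" using fR R1 unfolding R'_def ksets_def YN by (auto simp: card_Diff_singleton)
    have RR: "R = insert 1 R'" "1 \<notin> R'" using R1 unfolding R'_def by auto
    have inj: "inj_on (insert 1) (pred Y (k - 1) R')"
    proof (rule inj_onI)
      fix A B assume "A \<in> pred Y (k - 1) R'" "B \<in> pred Y (k - 1) R'" "insert 1 A = insert 1 B"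
      moreover have "1 \<notin> A" "1 \<notin> B" using calculation(1,2) unfolding pred_def ksets_def YN by auto
      ultimately show "A = B" by (metis Diff_insert_absorb)
    qed
    have img: "insert 1 ` pred Y (k - 1) R' \<subseteq> pred N k R"
    proof
      fix X assume "X \<in> insert 1 ` pred Y (k - 1) R'"
      then obtain E' where E': "E' \<in> ksets Y (k - 1)" "lexw E' R'" "X = insert 1 E'"
        unfolding pred_def by blast
      have fE': "finite E'" "card E' = k - 1" "E' \<subseteq> Y" using ksetsD[OF E'(1) fY] by auto
      have n1: "1 \<notin> E'" using fE' YN by blast
      have "X \<in> ksets N k" using fE' n1 E'(3) n YN N1 unfolding ksets_def by auto
      moreover have "lexw X R" using lexw_insert[OF n1 RR(2)] E' RR(1) by simp
      ultimately show "X \<in> pred N k R" unfolding pred_def by blast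
    qed
    have "card (pred Y (k - 1) R') \<le> card (pred N k R)"
      using card_inj_on_le[OF inj img finite_pred[OF fN]] .
    also have "\<dots> < b" using R unfolding Lex_eq[OF fN] by blast
    finally have "card (pred Y (k - 1) R') < b" .
    then show ?thesis using R'k unfolding Lex_eq[OF fY] R'_def by blast
  qed
  define star2 where "star2 = {E \<in> ksets Y (k - 1). 2 \<in> E}"
  have cs2: "card star2 \<le> b" using card_star2[OF n] bG unfolding star2_def Y_def b_def by simp
  have F3: "2 \<in> T" if T: "T \<in> Lex Y k a" for T
  proof (rule ccontr)
    assume n2: "2 \<notin> T"
    have Tk: "T \<in> ksets Y k" using T Lex_sub[OF fY] by blast
    have fT: "finite T" "card T = k" "T \<subseteq> Y" using ksetsD[OF Tk fY] by auto
    have "card (Y - T) = n - 1 - k" using fT fY cY by (simp add: card_Diff_subset)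
    moreover have "2 \<in> Y - T" using Y2 n2 by blast
    ultimately have "card (Y - T - {2}) = n - 1 - k - 1" using fY by (simp add: card_Diff_singleton)
    then have "k - 2 \<le> card (Y - T - {2})" using n by simp
    then obtain Z where Z: "Z \<subseteq> Y - T - {2}" "card Z = k - 2" "finite Z"
      by (rule obtain_subset_with_card_n)
    define S where "S = insert 2 Z"
    have "2 \<notin> Z" using Z by blast
    then have "card S = k - 1" unfolding S_def using Z n by simp
    then have Sk: "S \<in> ksets Y (k - 1)" unfolding ksets_def S_def using Z Y2 by auto
    have "S \<in> star2" unfolding star2_def S_def using Sk S_def by blast
    then have "S \<in> Lex Y (k - 1) b"
      using down_in_Lex[OF fY _ _ _ cs2] star_down[OF fY mY] unfolding star2_def by blast
    moreover have "T \<inter> S = {}" using Z n2 unfolding S_def by blast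
    ultimately show False using hil[OF T] by blast
  qed
  have F4: "T \<subseteq> Y" if "T \<in> Lex Y k a" for T using that Lex_sub[OF fY] unfolding ksets_def by blast
  have H0: "H0 n k F = Lex Y k a" unfolding H0_def Y_def a_def ..
  have H1: "H1 n k G = Lex N k b" unfolding H1_def N_def b_def ..
  show ?thesis unfolding intersecting_def H0 H1
  proof (intro ballI)
    fix X1 X2 assume X1: "X1 \<in> Lex Y k a \<union> Lex N k b" and X2: "X2 \<in> Lex Y k a \<union> Lex N k b"
    have mixed: "T \<inter> R \<noteq> {}" if "T \<in> Lex Y k a" "R \<in> Lex N k b" for T R
      using hil[OF that(1) F2[OF that(2)]] by blast
    show "X1 \<inter> X2 \<noteq> {}"
      using X1 X2 F1 F3 mixed by blast
  qed
qed



lemma part_ii: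
  assumes n: "n > 2 * k" "k \<ge> 2"
    and F: "F \<subseteq> ksets {1..n} k" and G: "G \<subseteq> ksets {1..n} k"
    and ntF: "nontrivial F"
    and bG: "card (with1 G) > (n - 2) choose (k - 2)"
  shows "nontrivial (H0 n k F \<union> H1 n k G)"
proof -
  define N where "N = {1..n}"
  define Y where "Y = {2..n}"
  note bf = basic_facts[OF n]
  have fN: "finite N" and fY: "finite Y" and cN: "card N = n" and cY: "card Y = n - 1"
    and YN: "Y = N - {1}" and mN: "\<forall>y\<in>N. 1 \<le> y" and mY: "\<forall>y\<in>Y. 2 \<le> y" and Y2: "2 \<in> Y"
    and N1: "1 \<in> N"
    unfolding N_def Y_def using bf(1) bf(2) bf(3) bf(4) bf(5) bf(6) bf(7) bf(8) bf(9) by blast+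
  have N2: "2 \<in> N" using Y2 YN by blast
  define a where "a = card (without1 F)"
  define b where "b = card (with1 G)"
  have H0: "H0 n k F = Lex Y k a" unfolding H0_def Y_def a_def ..
  have H1: "H1 n k G = Lex N k b" unfolding H1_def N_def b_def ..
  have fF: "finite F" using finite_subset[OF F finite_ksets[OF bf(1)]] .
  have "without1 F \<noteq> {}"
  proof
    assume e: "without1 F = {}"
    then have "\<forall>E\<in>F. 1 \<in> E" unfolding without1_def by blast
    then have "1 \<in> \<Inter> F" by blast
    then show False using ntF unfolding nontrivial_def by blast
  qed
  moreover have "finite (without1 F)" using fF unfolding without1_def by simp
  ultimately have a1: "a > 0" unfolding a_def by (simp add: card_gt_0_iff)
  have "k \<le> card Y" using cY n by simp
  then obtain T0 where "T0 \<subseteq> Y" "card T0 = k" "finite T0" by (rule obtain_subset_with_card_n)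
  then have "ksets Y k \<noteq> {}" unfolding ksets_def by blast
  then obtain T where T: "T \<in> ksets Y k" "\<forall>E\<in>ksets Y k. \<not> lexw E T"
    using lex_min[OF fY subset_refl] by blast
  have "pred Y k T = {}" unfolding pred_def using T(2) by blast
  then have TL: "T \<in> Lex Y k a" unfolding Lex_eq[OF fY] using T(1) a1 by simp
  have T1: "1 \<notin> T" using T(1) YN unfolding ksets_def by blast
  define C where "C = {E \<in> ksets N k. 1 \<in> E \<and> 2 \<in> E}"
  have cC: "card C < b" unfolding C_def N_def using card_C12[OF n] bG b_def by simp
  have "k \<le> card (N - {2})" using cN N2 fN n by (simp add: card_Diff_singleton)
  then obtain R0 where R0: "R0 \<subseteq> N - {2}" "card R0 = k" "finite R0" by (rule obtain_subset_with_card_n)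
  then have "R0 \<in> ksets N k - C" unfolding C_def ksets_def by blast
  then have Zne: "ksets N k - C \<noteq> {}" by blast
  obtain R where R: "R \<in> ksets N k - C" "\<forall>E\<in>ksets N k - C. \<not> lexw E R"
    using lex_min[OF fN _ Zne] by blast
  have "pred N k R \<subseteq> C" unfolding pred_def using R(2) by blast
  then have "card (pred N k R) \<le> card C" using finite_ksets[OF fN] unfolding C_def by (intro card_mono) auto
  then have RL: "R \<in> Lex N k b" unfolding Lex_eq[OF fN] using R(1) cC by simp
  have star1: "b \<le> card {E \<in> ksets N k. 1 \<in> E}"
  proof -
    have "with1 G \<subseteq> {E \<in> ksets N k. 1 \<in> E}" using G unfolding with1_def N_def by blast
    then show ?thesis unfolding b_def using finite_ksets[OF fN] by (intro card_mono) auto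
  qed
  have R1: "1 \<in> R" using Lex_has_min[OF fN mN RL star1] .
  have R2n: "2 \<notin> R" using R(1) R1 unfolding C_def by blast
  have fR: "finite R" "card R = k" "R \<subseteq> N" using ksetsD[of R N k] R(1) fN by auto
  have "card (N - R) = n - k" using fR fN cN by (simp add: card_Diff_subset)
  moreover have "2 \<in> N - R" using N2 R2n by blast
  ultimately have "card (N - R - {2}) = n - k - 1" using fN by (simp add: card_Diff_singleton)
  then have "k - 2 \<le> card (N - R - {2})" using n by simp
  then obtain Z where Z: "Z \<subseteq> N - R - {2}" "card Z = k - 2" "finite Z"
    by (rule obtain_subset_with_card_n)
  define R2 where "R2 = insert 1 (insert 2 Z)"
  have "1 \<notin> Z" "2 \<notin> Z" using Z R1 by auto
  then have "card R2 = k" unfolding R2_def using Z n by simp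
  then have R2k: "R2 \<in> ksets N k" unfolding ksets_def R2_def using Z N1 N2 by auto
  have R2C: "R2 \<in> C" unfolding C_def using R2k R2_def by blast
  have Cdown: "E' \<in> C" if E: "E \<in> C" and E': "E' \<in> ksets N k" and l: "lexw E' E" for E E'
  proof -
    have Ek: "E \<in> ksets N k" "1 \<in> E" "2 \<in> E" using E unfolding C_def by auto
    have e1: "1 \<in> E'" using star_down[OF fN mN Ek(1,2) E' l] .
    have e2: "2 \<in> E'"
    proof (rule ccontr)
      assume n2: "2 \<notin> E'"
      have sub: "E \<subseteq> N" "E' \<subseteq> N" using Ek(1) E' unfolding ksets_def by auto
      have "\<forall>i<2. i \<in> E \<longleftrightarrow> i \<in> E'"
      proof (intro allI impI)
        fix i :: nat assume "i < 2"
        then consider "i = 0" | "i = 1" by linarith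
        then show "i \<in> E \<longleftrightarrow> i \<in> E'"
        proof cases
          case 1 then show ?thesis using sub mN by force
        next
          case 2 then show ?thesis using Ek e1 by simp
        qed
      qed
      then have "lexw E E'" unfolding lexw_def using Ek(3) n2 by blast
      then show False using l lexw_asym by blast
    qed
    show ?thesis unfolding C_def using E' e1 e2 by blast
  qed
  have Csub: "C \<subseteq> ksets N k" unfolding C_def by blast
  have cCb: "card C \<le> b" using cC by linarith
  have R2L: "R2 \<in> Lex N k b" by (rule down_in_Lex[OF fN Csub Cdown R2C cCb])
  have "\<Inter> (Lex Y k a \<union> Lex N k b) = {}"
  proof (rule ccontr)
    assume "\<Inter> (Lex Y k a \<union> Lex N k b) \<noteq> {}"
    then obtain x where x: "x \<in> \<Inter> (Lex Y k a \<union> Lex N k b)" by blast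
    have "x \<in> T" "x \<in> R" "x \<in> R2" using x TL RL R2L by auto
    moreover have "R \<inter> R2 \<subseteq> {1}" unfolding R2_def using Z R2n by blast
    ultimately show False using T1 by blast
  qed
  then show ?thesis unfolding nontrivial_def H0 H1 .
qed

theorem lemma2p3:
  fixes n k :: nat and F G :: "nat set set"
  assumes "n > 2 * k" and "2 * k \<ge> 4"
    and "F \<subseteq> ksets {1..n} k" and "G \<subseteq> ksets {1..n} k"
    and "nontrivial F" and "nontrivial G"
    and "cross_intersecting F G"
    and "card (with1 F) \<ge> (n - 2) choose (k - 2)"
    and "card (with1 G) \<ge> (n - 2) choose (k - 2)"
  shows "(intersecting (H0 n k F \<union> H1 n k G) \<and> intersecting (H1 n k F \<union> H0 n k G))
     \<and> (min (card (with1 F)) (card (with1 G)) > (n - 2) choose (k - 2) \<longrightarrow>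
           nontrivial (H0 n k F \<union> H1 n k G) \<and> nontrivial (H1 n k F \<union> H0 n k G))"
proof -
  have n: "n > 2 * k" "k \<ge> 2" using assms(1,2) by auto
  have crGF: "cross_intersecting G F" using assms(7) unfolding cross_intersecting_def by blast
  have i1: "intersecting (H0 n k F \<union> H1 n k G)" using part_i[OF n assms(3,4,7,9)] .
  have i2: "intersecting (H1 n k F \<union> H0 n k G)" using part_i[OF n assms(4,3) crGF assms(8)]
    by (simp add: Un_commute)
  have ii: "nontrivial (H0 n k F \<union> H1 n k G) \<and> nontrivial (H1 n k F \<union> H0 n k G)"
    if m: "min (card (with1 F)) (card (with1 G)) > (n - 2) choose (k - 2)"
  proof -
    have bF: "card (with1 F) > (n - 2) choose (k - 2)" and bG: "card (with1 G) > (n - 2) choose (k - 2)"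
      using m by auto
    have "nontrivial (H0 n k F \<union> H1 n k G)" using part_ii[OF n assms(3,4,5) bG] .
    moreover have "nontrivial (H1 n k F \<union> H0 n k G)" using part_ii[OF n assms(4,3,6) bF]
      by (simp add: Un_commute)
    ultimately show ?thesis by blast
  qed
  show ?thesis using i1 i2 ii by blast
qed


end
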